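(* Let $G$ be a discrete group. If every countable subgroup $H$ of $G$ satisfies the $\ell^1$ Bass conjecture (i.e. $HS^1:K_0(\ell^1(H))\to\ell^1([H])$ takes values in $\bigoplus_{\mathrm{FC}(H)}\mathbb{C}$), then $G$ satisfies the $\ell^1$ Bass conjecture, i.e. $HS^1:K_0(\ell^1(G))\to\ell^1([G])$ takes values in $\bigoplus_{\mathrm{FC}(G)}\mathbb{C}$.
   Context: For a discrete group $G$: $[G]$ is the set of conjugacy classes, $\mathrm{FC}(G)\subset[G]$ those of elements of finite order; $\ell^1(G)$ is the Banach convolution algebra of absolutely summable functions $G\to\mathbb{C}$, written $a=\sum a_g g$; $\ell^1([G])$ is the Banach space of absolutely summable functions on $[G]$. The trace $p:\ell^1(G)\to\ell^1([G])$, $p(a)=\sum_{[x]}\big(\sum_{g\in[x]}a_g\big)[x]$, induces the $\ell^1$ Hattori–Stallings trace $HS^1:K_0(\ell^1(G))\to\ell^1([G])$ (evaluate $p$ on the trace of an idempotent matrix representing a finitely generated projective module). *)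

theory Defs
  imports "HOL-Algebra.Group" "HOL-Analysis.Infinite_Sum"
begin

text \<open>Everything is relative to a subgroup S of the group G: the group structure on S
is the one inherited from G.\<close>

definition l1 :: "'a set \<Rightarrow> ('a \<Rightarrow> complex) \<Rightarrow> bool" where
  "l1 S a \<longleftrightarrow> (\<forall>g. g \<notin> S \<longrightarrow> a g = 0) \<and> a abs_summable_on S"

definition conv :: "('a, 'b) monoid_scheme \<Rightarrow> 'a set \<Rightarrow> ('a \<Rightarrow> complex) \<Rightarrow> ('a \<Rightarrow> complex) \<Rightarrow> ('a \<Rightarrow> complex)" where
  "conv G S a b = (\<lambda>g. if g \<in> S then (\<Sum>\<^sub>\<infinity>h\<in>S. a h * b (inv\<^bsub>G\<^esub> h \<otimes>\<^bsub>G\<^esub> g)) else 0)"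

definition idem_matrix :: "('a, 'b) monoid_scheme \<Rightarrow> 'a set \<Rightarrow> nat \<Rightarrow> (nat \<Rightarrow> nat \<Rightarrow> 'a \<Rightarrow> complex) \<Rightarrow> bool" where
  "idem_matrix G S n e \<longleftrightarrow>
     (\<forall>i<n. \<forall>j<n. l1 S (e i j)) \<and>
     (\<forall>i<n. \<forall>j<n. (\<forall>g. (\<Sum>k<n. conv G S (e i k) (e k j) g) = e i j g))"

definition conj_class :: "('a, 'b) monoid_scheme \<Rightarrow> 'a set \<Rightarrow> 'a \<Rightarrow> 'a set" where
  "conj_class G S x = {h \<otimes>\<^bsub>G\<^esub> x \<otimes>\<^bsub>G\<^esub> inv\<^bsub>G\<^esub> h | h. h \<in> S}"

text \<open>The trace p : l1(S) -> l1([S]), evaluated at a conjugacy class c.\<close>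
definition ptrace :: "('a \<Rightarrow> complex) \<Rightarrow> 'a set \<Rightarrow> complex" where
  "ptrace a c = (\<Sum>\<^sub>\<infinity>g\<in>c. a g)"

definition fin_order :: "('a, 'b) monoid_scheme \<Rightarrow> 'a \<Rightarrow> bool" where
  "fin_order G x \<longleftrightarrow> (\<exists>m::nat. m > 0 \<and> x [^]\<^bsub>G\<^esub> m = \<one>\<^bsub>G\<^esub>)"

text \<open>HS^1 of the projective module given by the idempotent matrix e: p(trace e).\<close>
definition HS1 :: "('a, 'b) monoid_scheme \<Rightarrow> 'a set \<Rightarrow> nat \<Rightarrow> (nat \<Rightarrow> nat \<Rightarrow> 'a \<Rightarrow> complex) \<Rightarrow> 'a set \<Rightarrow> complex" where
  "HS1 G S n e = ptrace (\<lambda>g. \<Sum>i<n. e i i g)"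

text \<open>The l1 Bass conjecture for (the subgroup) S: HS^1 takes values in the direct
sum over FC(S) of C, i.e. HS^1 of every idempotent matrix is finitely supported on
conjugacy classes, and supported on classes of elements of finite order.\<close>
definition l1_bass :: "('a, 'b) monoid_scheme \<Rightarrow> 'a set \<Rightarrow> bool" where
  "l1_bass G S \<longleftrightarrow>
     (\<forall>n e. idem_matrix G S n e \<longrightarrow>
        finite {c \<in> conj_class G S ` S. HS1 G S n e c \<noteq> 0} \<and>
        (\<forall>c \<in> conj_class G S ` S. HS1 G S n e c \<noteq> 0 \<longrightarrow> (\<forall>x\<in>c. fin_order G x)))"

end

theory Submission
  imports Defs "HOL-Algebra.Generated_Groups"
begin

lemma summable_on_sum_n:
  fixes f :: "nat \<Rightarrow> 'a \<Rightarrow> complex"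
  assumes "\<And>i. i < n \<Longrightarrow> f i summable_on A"
  shows "(\<lambda>x. \<Sum>i<n. f i x) summable_on A"
  using assms
proof (induction n)
  case 0 then show ?case by simp
next
  case (Suc n) then show ?case by (simp add: summable_on_add)
qed

lemma infsum_partition:
  fixes f :: "'a \<Rightarrow> 'c::banach"
  assumes "f summable_on (\<Union>D)"
    and "\<And>d d'. d\<in>D \<Longrightarrow> d'\<in>D \<Longrightarrow> d\<noteq>d' \<Longrightarrow> d \<inter> d' = {}"
  shows "infsum f (\<Union>D) = (\<Sum>\<^sub>\<infinity>d\<in>D. infsum f d)"
proof -
  have inj: "inj_on snd (Sigma D (\<lambda>d. d))"
    using assms(2) by (force simp: inj_on_def)
  have img: "snd ` Sigma D (\<lambda>d. d) = \<Union>D" by force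
  have s: "(f \<circ> snd) summable_on (Sigma D (\<lambda>d. d))"
    using summable_on_reindex[OF inj, of f] assms(1) img by simp
  have "infsum f (\<Union>D) = infsum (f \<circ> snd) (Sigma D (\<lambda>d. d))"
    using infsum_reindex[OF inj] img by simp
  also have "\<dots> = (\<Sum>\<^sub>\<infinity>d\<in>D. infsum f d)"
    using infsum_Sigma'_banach[of "\<lambda>d x. f x" D "\<lambda>d. d"] s
    by (simp add: case_prod_unfold o_def)
  finally show ?thesis .
qed


context group begin

lemma cc_sub: "subgroup S G \<Longrightarrow> y \<in> carrier G \<Longrightarrow> conj_class G S y \<subseteq> carrier G"
  unfolding conj_class_def by (auto dest: subgroup.mem_carrier)

lemma cc_self: "subgroup S G \<Longrightarrow> y \<in> carrier G \<Longrightarrow> y \<in> conj_class G S y"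
  unfolding conj_class_def by (force intro: subgroup.one_closed)

lemma cc_in: "subgroup S G \<Longrightarrow> y \<in> S \<Longrightarrow> conj_class G S y \<subseteq> S"
  unfolding conj_class_def by (auto intro: subgroup.m_closed subgroup.m_inv_closed)

lemma cc_mono: "S \<subseteq> T \<Longrightarrow> conj_class G S y \<subseteq> conj_class G T y"
  unfolding conj_class_def by auto

lemma conj_comp: "k \<in> carrier G \<Longrightarrow> h \<in> carrier G \<Longrightarrow> y \<in> carrier G \<Longrightarrow>
   k \<otimes> (h \<otimes> y \<otimes> inv h) \<otimes> inv k = (k \<otimes> h) \<otimes> y \<otimes> inv (k \<otimes> h)"
  by (simp add: inv_mult_group m_assoc)

lemma cc_memI: "h \<in> S \<Longrightarrow> w = h \<otimes> y \<otimes> inv h \<Longrightarrow> w \<in> conj_class G S y"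
  unfolding conj_class_def by blast

lemma cc_memE: "w \<in> conj_class G S y \<Longrightarrow> (\<And>h. h \<in> S \<Longrightarrow> w = h \<otimes> y \<otimes> inv h \<Longrightarrow> P) \<Longrightarrow> P"
  unfolding conj_class_def by blast

lemma cc_trans:
  assumes S: "subgroup S G" and y: "y \<in> carrier G" and z: "z \<in> conj_class G S y"
  shows "conj_class G S z = conj_class G S y"
proof -
  obtain h where h: "h \<in> S" "z = h \<otimes> y \<otimes> inv h" using z by (rule cc_memE)
  have hc: "h \<in> carrier G" by (rule subgroup.mem_carrier[OF S h(1)])
  show ?thesis
  proof
    show "conj_class G S z \<subseteq> conj_class G S y"
    proof
      fix w assume "w \<in> conj_class G S z"
      then obtain k where k: "k \<in> S" "w = k \<otimes> z \<otimes> inv k" by (rule cc_memE)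
      have kc: "k \<in> carrier G" by (rule subgroup.mem_carrier[OF S k(1)])
      have "w = (k \<otimes> h) \<otimes> y \<otimes> inv (k \<otimes> h)" using k(2) h(2) conj_comp[OF kc hc y] by (simp only:)
      moreover have "k \<otimes> h \<in> S" by (rule subgroup.m_closed[OF S k(1) h(1)])
      ultimately show "w \<in> conj_class G S y" by (intro cc_memI)
    qed
  next
    show "conj_class G S y \<subseteq> conj_class G S z"
    proof
      fix w assume "w \<in> conj_class G S y"
      then obtain k where k: "k \<in> S" "w = k \<otimes> y \<otimes> inv k" by (rule cc_memE)
      have kc: "k \<in> carrier G" by (rule subgroup.mem_carrier[OF S k(1)])
      have ih: "inv h \<in> carrier G" using hc by simp
      have e1: "inv h \<otimes> z \<otimes> inv (inv h) = y"
        using h(2) conj_comp[OF ih hc y] l_inv[OF hc] inv_one l_one[OF y] r_one[OF y] by (simp only:)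
      have zc: "z \<in> carrier G" using h(2) hc y by simp
      have "(k \<otimes> inv h) \<otimes> z \<otimes> inv (k \<otimes> inv h) = k \<otimes> (inv h \<otimes> z \<otimes> inv (inv h)) \<otimes> inv k"
        by (rule conj_comp[OF kc ih zc, symmetric])
      also have "\<dots> = w" using e1 k(2) by (simp only:)
      finally have "w = (k \<otimes> inv h) \<otimes> z \<otimes> inv (k \<otimes> inv h)" by (rule sym)
      moreover have "k \<otimes> inv h \<in> S" by (rule subgroup.m_closed[OF S k(1) subgroup.m_inv_closed[OF S h(1)]])
      ultimately show "w \<in> conj_class G S z" by (intro cc_memI)
    qed
  qed
qed

lemma conj_pow: "g \<in> carrier G \<Longrightarrow> y \<in> carrier G \<Longrightarrow>
   (g \<otimes> y \<otimes> inv g) [^] (m::nat) = g \<otimes> y [^] m \<otimes> inv g"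
proof (induction m)
  case 0 then show ?case by simp
next
  case (Suc m)
  have "(g \<otimes> y \<otimes> inv g) [^] Suc m = (g \<otimes> y [^] m \<otimes> inv g) \<otimes> (g \<otimes> y \<otimes> inv g)"
    using Suc by simp
  also have "\<dots> = g \<otimes> (y [^] m \<otimes> y) \<otimes> inv g"
    using Suc.prems by (simp add: m_assoc[symmetric]) (simp add: m_assoc)
  finally show ?case by (simp add: nat_pow_Suc)
qed

lemma fo_conj: "g \<in> carrier G \<Longrightarrow> y \<in> carrier G \<Longrightarrow> fin_order G y \<Longrightarrow> fin_order G (g \<otimes> y \<otimes> inv g)"
  unfolding fin_order_def using conj_pow by auto


lemma foldr_carrier: "set l \<subseteq> carrier G \<Longrightarrow> foldr (\<otimes>) l \<one> \<in> carrier G"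
  by (induction l) auto

lemma foldr_append: "set xs \<subseteq> carrier G \<Longrightarrow> set ys \<subseteq> carrier G \<Longrightarrow>
   foldr (\<otimes>) (xs @ ys) \<one> = foldr (\<otimes>) xs \<one> \<otimes> foldr (\<otimes>) ys \<one>"
proof (induction xs)
  case Nil then show ?case using foldr_carrier[of ys] by simp
next
  case (Cons a xs) then show ?case using foldr_carrier[of xs] foldr_carrier[of ys] by (simp add: m_assoc)
qed

lemma countable_generate:
  assumes A: "A \<subseteq> carrier G" and cA: "countable A"
  shows "countable (generate G A)"
proof -
  let ?B = "A \<union> (\<lambda>a. inv a) ` A"
  have B: "?B \<subseteq> carrier G" using A by auto
  have "generate G A \<subseteq> (\<lambda>l. foldr (\<otimes>) l \<one>) ` lists ?B"
  proof
    fix x assume "x \<in> generate G A"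
    then show "x \<in> (\<lambda>l. foldr (\<otimes>) l \<one>) ` lists ?B"
    proof (induction rule: generate.induct)
      case one then show ?case by (intro image_eqI[of _ _ "[]"]) auto
    next
      case (incl h) then show ?case using A by (intro image_eqI[of _ _ "[h]"]) auto
    next
      case (inv h) then show ?case using A by (intro image_eqI[of _ _ "[inv h]"]) auto
    next
      case (eng h1 h2)
      then obtain xs ys where l: "xs \<in> lists ?B" "h1 = foldr (\<otimes>) xs \<one>" "ys \<in> lists ?B" "h2 = foldr (\<otimes>) ys \<one>"
        by auto
      have "set xs \<subseteq> carrier G" "set ys \<subseteq> carrier G" using l(1,3) B by auto
      then have "h1 \<otimes> h2 = foldr (\<otimes>) (xs @ ys) \<one>"
        using l(2,4) foldr_append[of xs ys] by simp
      moreover have "xs @ ys \<in> lists ?B" using l by auto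
      ultimately show ?case by (rule image_eqI)
    qed
  qed
  moreover have "countable ((\<lambda>l. foldr (\<otimes>) l \<one>) ` lists ?B)" using cA by simp
  ultimately show ?thesis by (rule countable_subset)
qed

end


lemma HS1_eq: "HS1 G S n e c = infsum (\<lambda>g. \<Sum>i<n. e i i g) c"
  unfolding HS1_def ptrace_def by simp

theorem lemma1p5:
  fixes G :: "('a, 'b) monoid_scheme"
  assumes "group G"
    and "\<And>H. subgroup H G \<Longrightarrow> countable H \<Longrightarrow> l1_bass G H"
  shows "l1_bass G (carrier G)"
  unfolding l1_bass_def
proof (intro allI impI conjI)
  interpret group G by (rule assms(1))
  fix n e assume em: "idem_matrix G (carrier G) n e"
  have l1e: "\<And>i j. i < n \<Longrightarrow> j < n \<Longrightarrow> l1 (carrier G) (e i j)"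
    using em unfolding idem_matrix_def by blast
  define A where "A = (\<Union>i<n. \<Union>j<n. {g \<in> carrier G. e i j g \<noteq> 0})"
  have Ac: "A \<subseteq> carrier G" unfolding A_def by auto
  have cA: "countable A" unfolding A_def
  proof (intro countable_UN)
    fix i j assume "i \<in> {..<n}" "j \<in> {..<n}"
    then have "e i j abs_summable_on carrier G" using l1e unfolding l1_def by auto
    then show "countable {g \<in> carrier G. e i j g \<noteq> 0}" by (rule abs_summable_countable)
  qed auto
  define H where "H = generate G A"
  have sH: "subgroup H G" unfolding H_def by (rule generate_is_subgroup[OF Ac])
  have cH: "countable H" unfolding H_def by (rule countable_generate[OF Ac cA])
  have AH: "A \<subseteq> H" unfolding H_def by (intro subsetI generate.incl)
  have HG: "H \<subseteq> carrier G" by (rule subgroup.subset[OF sH])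
  have zero: "e i j g = 0" if "i < n" "j < n" "g \<notin> H" for i j g
  proof (cases "g \<in> carrier G")
    case True
    then have "g \<notin> A" using that AH by blast
    then show ?thesis using True that unfolding A_def by auto
  next
    case False then show ?thesis using l1e[OF that(1,2)] unfolding l1_def by auto
  qed
  have convEq: "conv G H (e i k) (e k j) g = conv G (carrier G) (e i k) (e k j) g"
    if "i < n" "k < n" "g \<in> H" for i k j g
  proof -
    have gc: "g \<in> carrier G" using that HG by blast
    have "(\<Sum>\<^sub>\<infinity>h\<in>H. e i k h * e k j (inv\<^bsub>G\<^esub> h \<otimes>\<^bsub>G\<^esub> g)) = (\<Sum>\<^sub>\<infinity>h\<in>carrier G. e i k h * e k j (inv\<^bsub>G\<^esub> h \<otimes>\<^bsub>G\<^esub> g))"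
      by (rule infsum_cong_neutral) (use zero[OF that(1,2)] HG in auto)
    then show ?thesis unfolding conv_def using that gc by simp
  qed
  have emH: "idem_matrix G H n e"
    unfolding idem_matrix_def
  proof (intro conjI allI impI)
    fix i j assume ij: "i < n" "j < n"
    have "e i j abs_summable_on carrier G" using l1e[OF ij] unfolding l1_def by auto
    then have "e i j abs_summable_on H" using HG by (rule summable_on_subset_banach)
    then show "l1 H (e i j)" unfolding l1_def using zero[OF ij] by auto
  next
    fix i j g assume ij: "i < n" "j < n"
    have eq: "(\<Sum>k<n. conv G (carrier G) (e i k) (e k j) g) = e i j g"
      using em ij unfolding idem_matrix_def by blast
    show "(\<Sum>k<n. conv G H (e i k) (e k j) g) = e i j g"
    proof (cases "g \<in> H")
      case True
      then show ?thesis using eq convEq ij by simp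
    next
      case False
      then show ?thesis using zero[OF ij False] unfolding conv_def by simp
    qed
  qed
  have bH: "l1_bass G H" by (rule assms(2)[OF sH cH])
  have finH: "finite {c \<in> conj_class G H ` H. HS1 G H n e c \<noteq> 0}"
    using bH emH unfolding l1_bass_def by blast
  have foH: "\<And>c. c \<in> conj_class G H ` H \<Longrightarrow> HS1 G H n e c \<noteq> 0 \<Longrightarrow> \<forall>x\<in>c. fin_order G x"
    using bH emH unfolding l1_bass_def by blast
  have sG: "subgroup (carrier G) G" by (rule subgroup_self)
  define t where "t = (\<lambda>g. \<Sum>i<n. e i i g)"
  have HS: "\<And>S c. HS1 G S n e c = infsum t c" unfolding t_def by (rule HS1_eq)
  have tsum: "t summable_on carrier G" unfolding t_def
  proof (rule summable_on_sum_n)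
    fix i assume "i < n"
    then have "e i i abs_summable_on carrier G" using l1e unfolding l1_def by auto
    then show "e i i summable_on carrier G" by (rule abs_summable_summable)
  qed
  have tz: "t g = 0" if "g \<notin> H" for g unfolding t_def using zero that by simp
  have key: "\<exists>y\<in>H. conj_class G (carrier G) y = conj_class G (carrier G) x \<and> HS1 G H n e (conj_class G H y) \<noteq> 0"
    if xc: "x \<in> carrier G" and nz: "HS1 G (carrier G) n e (conj_class G (carrier G) x) \<noteq> 0" for x
  proof (rule ccontr)
    assume na: "\<not> ?thesis"
    define c where "c = conj_class G (carrier G) x"
    have cc: "c \<subseteq> carrier G" unfolding c_def by (rule cc_sub[OF sG xc])
    have same: "conj_class G (carrier G) y = c" if "y \<in> c" for y
      unfolding c_def by (rule cc_trans[OF sG xc]) (use that c_def in simp)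
    define D where "D = conj_class G H ` (c \<inter> H)"
    have UD: "\<Union>D = c \<inter> H"
    proof
      show "\<Union>D \<subseteq> c \<inter> H"
      proof
        fix z assume "z \<in> \<Union>D"
        then obtain y where y: "y \<in> c \<inter> H" "z \<in> conj_class G H y" unfolding D_def by blast
        have "z \<in> H" using cc_in[OF sH] y by blast
        moreover have "z \<in> conj_class G (carrier G) y" using cc_mono[OF HG] y by blast
        ultimately show "z \<in> c \<inter> H" using same y by blast
      qed
    next
      show "c \<inter> H \<subseteq> \<Union>D"
      proof
        fix y assume y: "y \<in> c \<inter> H"
        then have "y \<in> conj_class G H y" using cc_self[OF sH] cc by blast
        then show "y \<in> \<Union>D" unfolding D_def using y by blast
      qed
    qed
    have disj: "d \<inter> d' = {}" if dD: "d \<in> D" "d' \<in> D" "d \<noteq> d'" for d d'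
    proof (rule ccontr)
      assume "d \<inter> d' \<noteq> {}"
      then obtain w where w: "w \<in> d" "w \<in> d'" by blast
      obtain y where y: "y \<in> c \<inter> H" "d = conj_class G H y" using dD(1) unfolding D_def by blast
      obtain y' where y': "y' \<in> c \<inter> H" "d' = conj_class G H y'" using dD(2) unfolding D_def by blast
      have "y \<in> carrier G" "y' \<in> carrier G" using y y' cc by auto
      then have "conj_class G H w = d" "conj_class G H w = d'"
        using cc_trans[OF sH, of y w] cc_trans[OF sH, of y' w] w y y' by auto
      then show False using dD(3) by simp
    qed
    have "infsum t c = infsum t (c \<inter> H)"
      by (rule infsum_cong_neutral) (use tz in auto)
    also have "\<dots> = (\<Sum>\<^sub>\<infinity>d\<in>D. infsum t d)"
      unfolding UD[symmetric]
    proof (rule infsum_partition)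
      show "t summable_on \<Union> D" using UD cc by (intro summable_on_subset_banach[OF tsum]) auto
    qed (rule disj)
    also have "\<dots> = 0"
    proof (rule infsum_0)
      fix d assume "d \<in> D"
      then obtain y where y: "y \<in> c \<inter> H" "d = conj_class G H y" unfolding D_def by blast
      have "conj_class G (carrier G) y = conj_class G (carrier G) x" using same y c_def by simp
      then have "HS1 G H n e d = 0" using na y by blast
      then show "infsum t d = 0" using HS by simp
    qed
    finally show False using nz HS c_def by simp
  qed
  show "finite {c \<in> conj_class G (carrier G) ` carrier G. HS1 G (carrier G) n e c \<noteq> 0}"
  proof -
    define f where "f d = conj_class G (carrier G) (SOME y. y \<in> H \<and> d = conj_class G H y)" for d
    have "{c \<in> conj_class G (carrier G) ` carrier G. HS1 G (carrier G) n e c \<noteq> 0}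
          \<subseteq> f ` {c \<in> conj_class G H ` H. HS1 G H n e c \<noteq> 0}"
    proof
      fix c assume "c \<in> {c \<in> conj_class G (carrier G) ` carrier G. HS1 G (carrier G) n e c \<noteq> 0}"
      then obtain x where x: "x \<in> carrier G" "c = conj_class G (carrier G) x" "HS1 G (carrier G) n e c \<noteq> 0" by blast
      obtain y where y: "y \<in> H" "conj_class G (carrier G) y = c" "HS1 G H n e (conj_class G H y) \<noteq> 0"
        using key[OF x(1)] x by auto
      define y' where "y' = (SOME y'. y' \<in> H \<and> conj_class G H y = conj_class G H y')"
      have "y' \<in> H \<and> conj_class G H y = conj_class G H y'"
        unfolding y'_def by (rule someI[of _ y]) (use y in simp)
      then have y'H: "y' \<in> H" and y'eq: "conj_class G H y = conj_class G H y'" by auto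
      have yc: "y \<in> carrier G" using y HG by blast
      have "y' \<in> conj_class G H y'" using cc_self[OF sH] y'H HG by blast
      then have "y' \<in> conj_class G (carrier G) y" using y'eq cc_mono[OF HG] by blast
      then have "conj_class G (carrier G) y' = c" using cc_trans[OF sG yc] y by simp
      then have "c = f (conj_class G H y)" unfolding f_def y'_def by simp
      moreover have "conj_class G H y \<in> {c \<in> conj_class G H ` H. HS1 G H n e c \<noteq> 0}" using y by blast
      ultimately show "c \<in> f ` {c \<in> conj_class G H ` H. HS1 G H n e c \<noteq> 0}" by (rule image_eqI)
    qed
    then show ?thesis using finite_surj[OF finH] by blast
  qed
  show "\<forall>c\<in>conj_class G (carrier G) ` carrier G. HS1 G (carrier G) n e c \<noteq> 0 \<longrightarrow> (\<forall>x\<in>c. fin_order G x)"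
  proof (intro ballI impI)
    fix c z assume c: "c \<in> conj_class G (carrier G) ` carrier G" and nz: "HS1 G (carrier G) n e c \<noteq> 0"
      and z: "z \<in> c"
    obtain x where x: "x \<in> carrier G" "c = conj_class G (carrier G) x" using c by blast
    obtain y where y: "y \<in> H" "conj_class G (carrier G) y = c" "HS1 G H n e (conj_class G H y) \<noteq> 0"
      using key[OF x(1)] x nz by auto
    have yc: "y \<in> carrier G" using y HG by blast
    have "y \<in> conj_class G H y" using cc_self[OF sH yc] .
    then have fy: "fin_order G y" using foH[of "conj_class G H y"] y by blast
    have "z \<in> conj_class G (carrier G) y" using z y by simp
    then obtain g where g: "g \<in> carrier G" "z = g \<otimes>\<^bsub>G\<^esub> y \<otimes>\<^bsub>G\<^esub> inv\<^bsub>G\<^esub> g" by (rule cc_memE)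
    show "fin_order G z" using fo_conj[OF g(1) yc fy] g(2) by simp
  qed
qed

end
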